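(* Let $H_X\in\mathbb{F}_2^{m_X\times n}$ and $H_Z\in\mathbb{F}_2^{m_Z\times n}$ satisfy $H_XH_Z^{\mathsf T}=0$ over $\mathbb{F}_2$. Let $P\ge1$ and consider a CPM $P$ lift specified by shifts $s^X_{x,c}\in\mathbb{Z}_P$ for each nonzero entry $(x,c)$ of $H_X$ and $s^Z_{z,c}\in\mathbb{Z}_P$ for each nonzero entry $(z,c)$ of $H_Z$. Suppose there are a row $z$ of $H_Z$, four distinct rows $x_0,x_1,x_2,x_3$ of $H_X$, and four distinct columns $c_0,c_1,c_2,c_3$ such that, with indices modulo $4$, \[ \{c_{a-1},c_a\}\subseteq \mathrm{supp}(x_a)\cap\mathrm{supp}(z)\qquad(a=0,1,2,3). \] Then the Tanner graph of $H_X$ contains the 8-cycle $x_0-c_0-x_1-c_1-x_2-c_2-x_3-c_3-x_0$. Assume moreover that for each $a\in\{0,1,2,3\}$ the shifts satisfy the CSS zero constraint for the pair $(x_a,z)$ with the pair of shared columns $(c_{a-1},c_a)$, namely \[ s^X_{x_a,c_{a-1}}-s^Z_{z,c_{a-1}}-s^X_{x_a,c_a}+s^Z_{z,c_a}\equiv 0\pmod P \] (this is the case, in particular, when $\mathrm{supp}(x_a)\cap\mathrm{supp}(z)=\{c_{a-1},c_a\}$ and the lift satisfies the CSS zero constraints). Then the voltage of this 8-cycle is $0\pmod P$, and hence the cycle lifts to closed 8-cycles in every such CPM $P$ lift. The same statement holds with the roles of $X$ and $Z$ interchanged.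
   Context: The Tanner graph of a binary matrix $H$ is the bipartite graph with check nodes = rows, variable nodes = columns, and an edge $(r,c)$ iff $H_{rc}=1$; $\mathrm{supp}(x)$ denotes the set of columns where row $x$ is nonzero. A CPM $P$ lift replaces each nonzero entry $(r,c)$ with assigned shift $t\in\mathbb{Z}_P$ by the $P\times P$ circulant permutation matrix equal to the identity cyclically shifted by $t$, and each zero entry by the $P\times P$ zero block. CSS zero constraints: for every row $x$ of $H_X$ and row $z$ of $H_Z$, the (even-size) set of shared columns is partitioned into pairs, and for each pair $\{c,c'\}$ one imposes $s^X_{x,c}-s^Z_{z,c}-s^X_{x,c'}+s^Z_{z,c'}\equiv0\pmod P$; these guarantee the lifted matrices satisfy $\hat H_X\hat H_Z^{\mathsf T}=0$. The voltage of a Tanner cycle $r_0-c_0-r_1-c_1-\dots-r_{L-1}-c_{L-1}-r_0$ is the alternating signed sum of the shifts of its edges, $\sum_{a}(s_{r_a,c_{a-1}}-s_{r_a,c_a})$ (up to overall sign/orientation); a base cycle lifts to a closed cycle of the same length iff its voltage is $0\bmod P$. *)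

theory Defs
  imports Main "HOL-Library.Z2" "HOL-Number_Theory.Cong"
begin

definition supp :: "('r \<Rightarrow> 'c \<Rightarrow> bit) \<Rightarrow> 'c set \<Rightarrow> 'r \<Rightarrow> 'c set" where
  "supp H C x = {c \<in> C. H x c \<noteq> 0}"

text \<open>A closed cycle r_0 - c_0 - r_1 - c_1 - ... - r_(L-1) - c_(L-1) - r_0 in the
  Tanner graph of H (check nodes = rows in R, variable nodes = columns in C):
  all vertices distinct and in range, and edges (r_a, c_(a-1)), (r_a, c_a) present
  (indices mod L).\<close>
definition tanner_cycle ::
  "('r \<Rightarrow> 'c \<Rightarrow> bit) \<Rightarrow> 'r set \<Rightarrow> 'c set \<Rightarrow> nat \<Rightarrow> (nat \<Rightarrow> 'r) \<Rightarrow> (nat \<Rightarrow> 'c) \<Rightarrow> bool" where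
  "tanner_cycle H R C L r c \<longleftrightarrow>
     inj_on r {..<L} \<and> inj_on c {..<L} \<and>
     (\<forall>a<L. r a \<in> R \<and> c a \<in> C \<and>
        H (r a) (c ((a + L - 1) mod L)) \<noteq> 0 \<and> H (r a) (c a) \<noteq> 0)"

definition voltage :: "('r \<Rightarrow> 'c \<Rightarrow> int) \<Rightarrow> nat \<Rightarrow> (nat \<Rightarrow> 'r) \<Rightarrow> (nat \<Rightarrow> 'c) \<Rightarrow> int" where
  "voltage s L r c = (\<Sum>a<L. s (r a) (c ((a + L - 1) mod L)) - s (r a) (c a))"

text \<open>CPM P lift: block (r,c) is the P x P identity cyclically shifted by s r c
  if H r c is nonzero, and the zero block otherwise. Row (r,i), column (c,j).\<close>
definition cpm_lift :: "(nat \<Rightarrow> nat \<Rightarrow> bit) \<Rightarrow> (nat \<Rightarrow> nat \<Rightarrow> int) \<Rightarrow> nat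
    \<Rightarrow> nat \<times> nat \<Rightarrow> nat \<times> nat \<Rightarrow> bit" where
  "cpm_lift H s P = (\<lambda>(r, i) (c, j).
     if H r c \<noteq> 0 \<and> i < P \<and> j < P \<and> int j = (int i + s r c) mod int P then 1 else 0)"

definition orthogonal :: "nat \<Rightarrow> nat \<Rightarrow> nat \<Rightarrow> (nat \<Rightarrow> nat \<Rightarrow> bit) \<Rightarrow> (nat \<Rightarrow> nat \<Rightarrow> bit) \<Rightarrow> bool" where
  "orthogonal mX mZ n HX HZ \<longleftrightarrow> (\<forall>x<mX. \<forall>z<mZ. (\<Sum>c<n. HX x c * HZ z c) = 0)"

text \<open>The claim for one orientation: H_A plays the role of H_X (four rows r_a),
  H_B the role of H_Z (one row z).\<close>
definition eight_cycle_claim ::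
  "nat \<Rightarrow> nat \<Rightarrow> nat \<Rightarrow> (nat \<Rightarrow> nat \<Rightarrow> bit) \<Rightarrow> (nat \<Rightarrow> nat \<Rightarrow> bit)
    \<Rightarrow> (nat \<Rightarrow> nat \<Rightarrow> int) \<Rightarrow> (nat \<Rightarrow> nat \<Rightarrow> int) \<Rightarrow> nat \<Rightarrow> bool" where
  "eight_cycle_claim mA mB n HA HB sA sB P \<longleftrightarrow>
    (\<forall>z r c.
      z < mB \<and> (\<forall>a<4. r a < mA) \<and> inj_on r {..<4} \<and>
      (\<forall>a<4. c a < n) \<and> inj_on c {..<4} \<and>
      (\<forall>a<4. {c ((a + 3) mod 4), c a} \<subseteq> supp HA {..<n} (r a) \<inter> supp HB {..<n} z)
      \<longrightarrow>
      tanner_cycle HA {..<mA} {..<n} 4 r c \<and>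
      ((\<forall>a<4. [sA (r a) (c ((a + 3) mod 4)) - sB z (c ((a + 3) mod 4))
               - sA (r a) (c a) + sB z (c a) = 0] (mod int P))
       \<longrightarrow>
        [voltage sA 4 r c = 0] (mod int P) \<and>
        (\<forall>i<P. \<exists>r' c'. (\<forall>a<4. fst (r' a) = r a \<and> fst (c' a) = c a) \<and>
            snd (r' 0) = i \<and>
            tanner_cycle (cpm_lift HA sA P) ({..<mA} \<times> {..<P}) ({..<n} \<times> {..<P}) 4 r' c')))"

end

theory Submission
  imports Defs
begin

lemma all4: "(\<forall>a<(4::nat). Q a) \<longleftrightarrow> Q 0 \<and> Q 1 \<and> Q 2 \<and> Q 3"
  by (auto simp: less_Suc_eq numeral_eq_Suc)

lemma claim_general:
  assumes P: "P \<ge> 1"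
  shows "eight_cycle_claim mA mB n HA HB sA sB P"
  unfolding eight_cycle_claim_def
proof (intro allI impI)
  fix z :: nat and r c :: "nat \<Rightarrow> nat"
  assume H: "z < mB \<and> (\<forall>a<4. r a < mA) \<and> inj_on r {..<4} \<and>
      (\<forall>a<4. c a < n) \<and> inj_on c {..<4} \<and>
      (\<forall>a<4. {c ((a + 3) mod 4), c a} \<subseteq> supp HA {..<n} (r a) \<inter> supp HB {..<n} z)"
  have e: "\<forall>a<4. HA (r a) (c ((a + 3) mod 4)) \<noteq> 0 \<and> HA (r a) (c a) \<noteq> 0"
    using H by (auto simp: supp_def)
  have tc: "tanner_cycle HA {..<mA} {..<n} 4 r c"
  proof -
    have m: "\<And>a::nat. a + 4 - 1 = a + 3" by simp
    show ?thesis unfolding tanner_cycle_def m using H e by blast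
  qed
  show "tanner_cycle HA {..<mA} {..<n} 4 r c \<and>
      ((\<forall>a<4. [sA (r a) (c ((a + 3) mod 4)) - sB z (c ((a + 3) mod 4))
               - sA (r a) (c a) + sB z (c a) = 0] (mod int P))
       \<longrightarrow>
        [voltage sA 4 r c = 0] (mod int P) \<and>
        (\<forall>i<P. \<exists>r' c'. (\<forall>a<4. fst (r' a) = r a \<and> fst (c' a) = c a) \<and>
            snd (r' 0) = i \<and>
            tanner_cycle (cpm_lift HA sA P) ({..<mA} \<times> {..<P}) ({..<n} \<times> {..<P}) 4 r' c'))"
  proof (intro conjI impI tc)
    assume C: "\<forall>a<4. [sA (r a) (c ((a + 3) mod 4)) - sB z (c ((a + 3) mod 4))
               - sA (r a) (c a) + sB z (c a) = 0] (mod int P)"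
    define s where "s = (\<lambda>a b. sA (r a) (c b))"
    have V: "voltage sA 4 r c = s 0 3 - s 0 0 + s 1 0 - s 1 1 + s 2 1 - s 2 2 + s 3 2 - s 3 3"
    proof -
      have u: "{..<4::nat} = {0,1,2,3}" by auto
      show ?thesis unfolding voltage_def s_def u by simp
    qed
    have "[(s 0 3 - sB z (c 3) - s 0 0 + sB z (c 0)) + (s 1 0 - sB z (c 0) - s 1 1 + sB z (c 1))
          + (s 2 1 - sB z (c 1) - s 2 2 + sB z (c 2)) + (s 3 2 - sB z (c 2) - s 3 3 + sB z (c 3))
          = 0 + 0 + 0 + 0] (mod int P)"
      using C unfolding all4 s_def by (intro cong_add) simp_all
    then show VV: "[voltage sA 4 r c = 0] (mod int P)" unfolding V by (simp add: algebra_simps)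
    show "\<forall>i<P. \<exists>r' c'. (\<forall>a<4. fst (r' a) = r a \<and> fst (c' a) = c a) \<and>
            snd (r' 0) = i \<and>
            tanner_cycle (cpm_lift HA sA P) ({..<mA} \<times> {..<P}) ({..<n} \<times> {..<P}) 4 r' c'"
    proof (intro allI impI)
      fix i assume iP: "i < P"
      define p where "p = int P"
      have p0: "p > 0" using P p_def by simp
      define I0 where "I0 = int i"
      define Is where "Is = [I0 mod p, (I0 + s 0 0 - s 1 0) mod p,
          (I0 + s 0 0 - s 1 0 + s 1 1 - s 2 1) mod p,
          (I0 + s 0 0 - s 1 0 + s 1 1 - s 2 1 + s 2 2 - s 3 2) mod p]"
      define Js where "Js = [(I0 + s 0 0) mod p, (I0 + s 0 0 - s 1 0 + s 1 1) mod p,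
          (I0 + s 0 0 - s 1 0 + s 1 1 - s 2 1 + s 2 2) mod p,
          (I0 + s 0 0 - s 1 0 + s 1 1 - s 2 1 + s 2 2 - s 3 2 + s 3 3) mod p]"
      define r' where "r' = (\<lambda>a. (r a, nat (Is ! a)))"
      define c' where "c' = (\<lambda>a. (c a, nat (Js ! a)))"
      have vm: "voltage sA 4 r c mod p = 0" using VV unfolding p_def cong_def by simp
      have last: "(I0 + s 0 0 - s 1 0 + s 1 1 - s 2 1 + s 2 2 - s 3 2 + s 3 3) mod p
          = (I0 + s 0 3) mod p"
      proof -
        have "I0 + s 0 0 - s 1 0 + s 1 1 - s 2 1 + s 2 2 - s 3 2 + s 3 3
             = (I0 + s 0 3) - voltage sA 4 r c" unfolding V by simp
        then show ?thesis using vm by (metis diff_zero mod_diff_right_eq)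
      qed
      have nn: "\<And>x. int (nat (x mod p)) = x mod p" using p0 by simp
      have lt: "\<And>x. nat (x mod p) < P" using p0 p_def
        by (simp add: nat_less_iff pos_mod_bound)
      have inj: "\<And>f g :: nat \<Rightarrow> nat \<times> nat. (\<And>a. fst (f a) = g' a) \<Longrightarrow> inj_on g' {..<4} \<Longrightarrow> inj_on f {..<4}" for g'
        by (metis inj_on_def)
      have ir: "inj_on r' {..<4}" using H by (intro inj[of r' r]) (auto simp: r'_def)
      have ic: "inj_on c' {..<4}" using H by (intro inj[of c' c]) (auto simp: c'_def)
      have snd0: "snd (r' 0) = i" using iP unfolding r'_def Is_def I0_def p_def by simp
      have m0: "\<And>x. 0 \<le> x mod p" "\<And>x. x mod p < int P" using p0 p_def by auto
      have ma: "\<And>x y. (x mod p + y) mod p = (x + y) mod p" by (simp add: mod_add_left_eq)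
      have q0: "(Is!0 + s 0 0) mod p = Js!0" unfolding Is_def Js_def by (simp add: ma)
      have q1: "(Is!1 + s 1 0) mod p = Js!0" unfolding Is_def Js_def by (simp add: ma)
      have q2: "(Is!1 + s 1 1) mod p = Js!1" unfolding Is_def Js_def by (simp add: ma)
      have q3: "(Is!2 + s 2 1) mod p = Js!1" unfolding Is_def Js_def by (simp add: ma)
      have q4: "(Is!2 + s 2 2) mod p = Js!2" unfolding Is_def Js_def by (simp add: ma)
      have q5: "(Is!3 + s 3 2) mod p = Js!2" unfolding Is_def Js_def by (simp add: ma)
      have q6: "(Is!3 + s 3 3) mod p = Js!3" unfolding Is_def Js_def by (simp add: ma)
      have q7: "(Is!0 + s 0 3) mod p = Js!3" unfolding Is_def Js_def using last by (simp add: ma)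
      have IsN: "\<And>k. k < 4 \<Longrightarrow> int (nat (Is!k)) = Is!k \<and> nat (Is!k) < P"
        unfolding Is_def using m0 by (auto simp: less_Suc_eq numeral_eq_Suc nat_less_iff)
      have JsN: "\<And>k. k < 4 \<Longrightarrow> int (nat (Js!k)) = Js!k \<and> nat (Js!k) < P"
        unfolding Js_def using m0 by (auto simp: less_Suc_eq numeral_eq_Suc nat_less_iff)
      have edge: "\<And>a b. a < 4 \<Longrightarrow> b < 4 \<Longrightarrow> HA (r a) (c b) \<noteq> 0 \<Longrightarrow>
           (Is!a + s a b) mod p = Js!b \<Longrightarrow> cpm_lift HA sA P (r' a) (c' b) \<noteq> 0"
        unfolding cpm_lift_def r'_def c'_def s_def
        using IsN JsN by (simp add: p_def)
      have tc': "tanner_cycle (cpm_lift HA sA P) ({..<mA} \<times> {..<P}) ({..<n} \<times> {..<P}) 4 r' c'"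
        unfolding tanner_cycle_def
        using ir ic H e IsN[of 0] IsN[of 1] IsN[of 2] IsN[of 3] JsN[of 0] JsN[of 1] JsN[of 2] JsN[of 3]
          edge[OF _ _ _ q0] edge[OF _ _ _ q1] edge[OF _ _ _ q2] edge[OF _ _ _ q3]
          edge[OF _ _ _ q4] edge[OF _ _ _ q5] edge[OF _ _ _ q6] edge[OF _ _ _ q7]
        by (simp add: all4 r'_def c'_def)
      show "\<exists>r' c'. (\<forall>a<4. fst (r' a) = r a \<and> fst (c' a) = c a) \<and>
            snd (r' 0) = i \<and>
            tanner_cycle (cpm_lift HA sA P) ({..<mA} \<times> {..<P}) ({..<n} \<times> {..<P}) 4 r' c'"
        using snd0 tc' by (intro exI[of _ r'] exI[of _ c']) (simp add: r'_def c'_def)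
    qed
  qed
qed

theorem mainTheorem3:
  fixes mX mZ n P :: nat
    and HX HZ :: "nat \<Rightarrow> nat \<Rightarrow> bit"
    and sX sZ :: "nat \<Rightarrow> nat \<Rightarrow> int"
  assumes "orthogonal mX mZ n HX HZ"
    and "P \<ge> 1"
  shows "eight_cycle_claim mX mZ n HX HZ sX sZ P \<and> eight_cycle_claim mZ mX n HZ HX sZ sX P"
  using assms(2) by (simp add: claim_general)

end
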